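(* Let $m\ge5$ be an odd integer and $h\ge1$ an integer, and set $n'=2^{m+h-2}-2^{m-2}-2^{\frac{m-1}{2}}$. Let $\mathbf{C}_0$ be a projective binary linear $[2^{m-2},m-1,2^{m-3}-2^{\frac{m-3}{2}}]_2$ code with maximum weight $2^{m-3}+2^{\frac{m-3}{2}}$, and let $\mathbf{C}_1$ be its simplex complementary code of dimension $m+h-1$, a $[2^{m+h-1}-2^{m-2}-1,\ m+h-1,\ 2^{m+h-2}-2^{m-3}-2^{\frac{m-3}{2}}]_2$ code with maximum weight $2^{m+h-2}$. Then the code $\mathbf{C}'$ obtained from $\mathbf{C}_1$ by the extension construction is a minimal binary linear $[2^{m+h-1}-2^{m-2}-1+n',\ m+h-1,\ 2^{m+h-2}-2^{m-3}-2^{\frac{m-3}{2}}]_2$ code with maximum weight $2^{m+h-1}-2^{m-2}-2^{\frac{m-1}{2}}$ (that is, $2^{m+h-2}+n'$), and it violates the Ashikhmin–Barg condition.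
   Context: Projective code: columns of a generator matrix are nonzero and pairwise distinct (binary case). Simplex complementary code of dimension $K=k+h$ of a projective binary $[n,k]$ code: append $h$ zeros to the columns of a generator matrix and take the code generated by the matrix whose columns are all nonzero vectors of $\mathbf{F}_2^K$ other than these $n$. Extension construction for a binary $[N,K]$ code $\mathbf{D}$, $K\ge2$, with minimum nonzero weight $w_{min}$, maximum weight $w_{max}$ and $n'=2w_{min}-w_{max}\ge1$: choose a basis $\mathbf{r}_1,\dots,\mathbf{r}_K$ with $wt(\mathbf{r}_1)=w_{max}$, $wt(\mathbf{r}_2)=w_{min}$; the extended code is generated by $(\mathbf{1},\mathbf{r}_1),(\mathbf{0},\mathbf{r}_2),\dots,(\mathbf{0},\mathbf{r}_K)$ in $\mathbf{F}_2^{n'+N}$. Minimal code: nonzero codewords with nested supports are equal. Ashikhmin–Barg condition (binary): $w_{min}/w_{max}>1/2$. *)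

theory Defs
  imports Complex_Main
begin

text \<open>Binary vectors of length N are functions nat \<Rightarrow> bool vanishing from index N on;
  True stands for 1 in F_2. Matrices are functions G i j (row i, column j).\<close>

type_synonym bvec = "nat \<Rightarrow> bool"

definition zvec :: bvec where "zvec = (\<lambda>_. False)"

definition vec_space :: "nat \<Rightarrow> bvec set" where
  "vec_space N = {v. \<forall>i\<ge>N. \<not> v i}"

definition vadd :: "bvec \<Rightarrow> bvec \<Rightarrow> bvec" where
  "vadd u v = (\<lambda>i. u i \<noteq> v i)"

definition supp :: "bvec \<Rightarrow> nat set" where "supp v = {i. v i}"

definition wt :: "bvec \<Rightarrow> nat" where "wt v = card (supp v)"

definition vsum :: "(nat \<Rightarrow> bvec) \<Rightarrow> nat set \<Rightarrow> bvec" where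
  "vsum f A = (\<lambda>j. odd (card {i\<in>A. f i j}))"

definition lin_code :: "nat \<Rightarrow> bvec set \<Rightarrow> bool" where
  "lin_code N C \<longleftrightarrow> C \<subseteq> vec_space N \<and> zvec \<in> C \<and> (\<forall>u\<in>C. \<forall>v\<in>C. vadd u v \<in> C)"

definition wmin :: "bvec set \<Rightarrow> nat" where "wmin C = Min (wt ` (C - {zvec}))"
definition wmax :: "bvec set \<Rightarrow> nat" where "wmax C = Max (wt ` C)"

definition is_code :: "nat \<Rightarrow> nat \<Rightarrow> nat \<Rightarrow> bvec set \<Rightarrow> bool" where
  "is_code N k d C \<longleftrightarrow> lin_code N C \<and> card C = 2 ^ k \<and> wmin C = d"

definition mrow :: "nat \<Rightarrow> (nat \<Rightarrow> nat \<Rightarrow> bool) \<Rightarrow> nat \<Rightarrow> bvec" where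
  "mrow N G i = (\<lambda>j. j < N \<and> G i j)"

definition mcol :: "nat \<Rightarrow> (nat \<Rightarrow> nat \<Rightarrow> bool) \<Rightarrow> nat \<Rightarrow> bvec" where
  "mcol k G j = (\<lambda>i. i < k \<and> G i j)"

definition span_vecs :: "nat \<Rightarrow> (nat \<Rightarrow> bvec) \<Rightarrow> bvec set" where
  "span_vecs k f = {vsum f A | A. A \<subseteq> {..<k}}"

definition lin_indep :: "nat \<Rightarrow> (nat \<Rightarrow> bvec) \<Rightarrow> bool" where
  "lin_indep k f \<longleftrightarrow> (\<forall>A \<subseteq> {..<k}. vsum f A = zvec \<longrightarrow> A = {})"

definition code_of :: "nat \<Rightarrow> nat \<Rightarrow> (nat \<Rightarrow> nat \<Rightarrow> bool) \<Rightarrow> bvec set" where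
  "code_of k N G = span_vecs k (mrow N G)"

definition is_gen_matrix :: "nat \<Rightarrow> nat \<Rightarrow> (nat \<Rightarrow> nat \<Rightarrow> bool) \<Rightarrow> bvec set \<Rightarrow> bool" where
  "is_gen_matrix k N G C \<longleftrightarrow> lin_indep k (mrow N G) \<and> code_of k N G = C"

definition projective :: "nat \<Rightarrow> nat \<Rightarrow> bvec set \<Rightarrow> bool" where
  "projective N k C \<longleftrightarrow> (\<exists>G. is_gen_matrix k N G C \<and>
     (\<forall>j<N. mcol k G j \<noteq> zvec) \<and> inj_on (mcol k G) {..<N})"

text \<open>H (K x N1, K = k + h) is a generator matrix of the simplex complementary code of the
  code with k x n generator matrix G: its columns are exactly (once each) the nonzero vectors of
  F_2^K other than the columns of G padded with h zeros (padding is automatic in this encoding).\<close>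
definition simplex_compl_matrix ::
  "nat \<Rightarrow> nat \<Rightarrow> (nat \<Rightarrow> nat \<Rightarrow> bool) \<Rightarrow> nat \<Rightarrow> nat \<Rightarrow> (nat \<Rightarrow> nat \<Rightarrow> bool) \<Rightarrow> bool" where
  "simplex_compl_matrix k n G h N1 H \<longleftrightarrow>
     bij_betw (mcol (k + h) H) {..<N1}
       ((vec_space (k + h) - {zvec}) - mcol k G ` {..<n})"

text \<open>Basis r 0, ..., r (K-1) of the code D (r 0 = r_1, r 1 = r_2 in the paper).\<close>
definition is_basis :: "nat \<Rightarrow> (nat \<Rightarrow> bvec) \<Rightarrow> bvec set \<Rightarrow> bool" where
  "is_basis K r D \<longleftrightarrow> lin_indep K r \<and> span_vecs K r = D"

definition ext_len :: "bvec set \<Rightarrow> nat" where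
  "ext_len D = 2 * wmin D - wmax D"

text \<open>Extension construction: code of length n' + N generated by (1, r_1), (0, r_2), ..., (0, r_K).\<close>
definition extension_code :: "bvec set \<Rightarrow> nat \<Rightarrow> (nat \<Rightarrow> bvec) \<Rightarrow> bvec set" where
  "extension_code D K r = span_vecs K
     (\<lambda>i. \<lambda>j. if j < ext_len D then i = 0 else r i (j - ext_len D))"

definition minimal_code :: "bvec set \<Rightarrow> bool" where
  "minimal_code C \<longleftrightarrow> (\<forall>u\<in>C - {zvec}. \<forall>v\<in>C - {zvec}. supp u \<subseteq> supp v \<longrightarrow> u = v)"

definition ashikhmin_barg :: "bvec set \<Rightarrow> bool" where
  "ashikhmin_barg C \<longleftrightarrow> real (wmin C) / real (wmax C) > 1 / 2"

end

theory Submission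
  imports Defs
begin


lemma odd_card_symdiff:
  assumes "finite X" "finite Y"
  shows "odd (card ((X - Y) \<union> (Y - X))) = (odd (card X) \<noteq> odd (card Y))"
proof -
  have d: "(X - Y) \<inter> (Y - X) = {}" by blast
  have "card ((X - Y) \<union> (Y - X)) = card (X - Y) + card (Y - X)"
    using assms d by (simp add: card_Un_disjoint)
  moreover have "card X = card (X \<inter> Y) + card (X - Y)"
    using assms(1) by (rule card_Int_Diff)
  moreover have "card Y = card (Y \<inter> X) + card (Y - X)"
    using assms(2) by (rule card_Int_Diff)
  moreover have "Y \<inter> X = X \<inter> Y" by blast
  ultimately show ?thesis by auto
qed

lemma vsum_symdiff:
  assumes "finite A" "finite B"
  shows "vsum f ((A - B) \<union> (B - A)) = vadd (vsum f A) (vsum f B)"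
proof
  fix j
  have "{i \<in> (A - B) \<union> (B - A). f i j} = ({i\<in>A. f i j} - {i\<in>B. f i j}) \<union> ({i\<in>B. f i j} - {i\<in>A. f i j})"
    by blast
  then show "vsum f ((A - B) \<union> (B - A)) j = vadd (vsum f A) (vsum f B) j"
    unfolding vsum_def vadd_def using assms by (simp add: odd_card_symdiff)
qed

lemma vsum_empty[simp]: "vsum f {} = zvec"
  by (simp add: vsum_def zvec_def)

lemma vsum_single[simp]: "vsum f {i} = f i"
proof
  fix j
  have "{ia\<in>{i}. f ia j} = (if f i j then {i} else {})" by auto
  then show "vsum f {i} j = f i j" by (simp add: vsum_def)
qed

lemma vadd_self_zero: "vadd u u = zvec" by (simp add: vadd_def zvec_def)

lemma vadd_eq_zero: "vadd u v = zvec \<Longrightarrow> u = v"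
  by (auto simp: vadd_def zvec_def fun_eq_iff)

lemma span_image: "span_vecs k f = vsum f ` Pow {..<k}"
  by (auto simp: span_vecs_def)

lemma span_finite: "finite (span_vecs k f)"
  by (simp add: span_image)

lemma in_span: "i < k \<Longrightarrow> f i \<in> span_vecs k f"
  unfolding span_vecs_def by (rule CollectI, rule exI[of _ "{i}"]) simp

lemma zero_in_span: "zvec \<in> span_vecs k f"
  unfolding span_vecs_def by (rule CollectI, rule exI[of _ "{}"]) simp

lemma indep_inj:
  assumes "lin_indep k f"
  shows "inj_on (vsum f) (Pow {..<k})"
proof
  fix A B assume A: "A \<in> Pow {..<k}" and B: "B \<in> Pow {..<k}" and e: "vsum f A = vsum f B"
  have fA: "finite A" "finite B" using A B finite_subset by auto
  have "vsum f ((A - B) \<union> (B - A)) = zvec"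
    using vsum_symdiff[OF fA] e by (simp add: vadd_self_zero)
  moreover have "(A - B) \<union> (B - A) \<subseteq> {..<k}" using A B by auto
  ultimately have "(A - B) \<union> (B - A) = {}" using assms unfolding lin_indep_def by blast
  then show "A = B" by blast
qed

lemma indep_card:
  assumes "lin_indep k f"
  shows "card (span_vecs k f) = 2 ^ k"
  using card_image[OF indep_inj[OF assms]] by (simp add: span_image card_Pow)

lemma span_lin_code:
  assumes "\<And>i. i < k \<Longrightarrow> f i \<in> vec_space N"
  shows "lin_code N (span_vecs k f)"
  unfolding lin_code_def
proof (intro conjI ballI)
  show "span_vecs k f \<subseteq> vec_space N"
  proof
    fix v assume "v \<in> span_vecs k f"
    then obtain A where A: "A \<subseteq> {..<k}" "v = vsum f A" by (auto simp: span_vecs_def)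
    show "v \<in> vec_space N" unfolding vec_space_def
    proof (intro CollectI allI impI)
      fix j assume "N \<le> j"
      then have e: "{i\<in>A. f i j} = {}" using A assms by (auto simp: vec_space_def)
      have "v j = odd (card {i\<in>A. f i j})" using A(2) by (simp add: vsum_def)
      also have "\<dots> = False" unfolding e by simp
      finally show "\<not> v j" by simp
    qed
  qed
  show "zvec \<in> span_vecs k f" by (rule zero_in_span)
  fix u v assume "u \<in> span_vecs k f" "v \<in> span_vecs k f"
  then obtain A B where "A \<subseteq> {..<k}" "u = vsum f A" "B \<subseteq> {..<k}" "v = vsum f B"
    by (auto simp: span_vecs_def)
  moreover then have "finite A" "finite B" using finite_subset by auto
  ultimately have h1: "vadd u v = vsum f ((A - B) \<union> (B - A))" and h2: "(A - B) \<union> (B - A) \<subseteq> {..<k}"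
    using vsum_symdiff[of A B f] by auto
  show "vadd u v \<in> span_vecs k f" unfolding span_vecs_def
    by (rule CollectI, rule exI[of _ "(A - B) \<union> (B - A)"], rule conjI[OF h1 h2])
qed

lemma mrow_in: "mrow N M i \<in> vec_space N" by (simp add: mrow_def vec_space_def)

lemma vec_space_finite_supp: "v \<in> vec_space N \<Longrightarrow> finite (supp v)"
  by (rule finite_subset[of _ "{..<N}"]) (auto simp: vec_space_def supp_def not_less[symmetric])

definition ip :: "nat set \<Rightarrow> bvec \<Rightarrow> bool" where "ip A v = odd (card {i\<in>A. v i})"

lemma vsum_mrow:
  assumes "A \<subseteq> {..<k}"
  shows "vsum (mrow N M) A j = (j < N \<and> ip A (mcol k M j))"
proof -
  have "{i\<in>A. mrow N M i j} = (if j < N then {i\<in>A. mcol k M j i} else {})"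
    using assms by (auto simp: mrow_def mcol_def)
  then show ?thesis by (simp add: vsum_def ip_def)
qed

lemma wt_mrow:
  assumes "A \<subseteq> {..<k}"
  shows "wt (vsum (mrow N M) A) = card {j\<in>{..<N}. ip A (mcol k M j)}"
proof -
  have "supp (vsum (mrow N M) A) = {j\<in>{..<N}. ip A (mcol k M j)}"
    unfolding supp_def using vsum_mrow[OF assms] by auto
  then show ?thesis by (simp add: wt_def)
qed


lemma ip_zvec[simp]: "\<not> ip A zvec" by (simp add: ip_def zvec_def)

lemma gen_col_eq:
  assumes "is_gen_matrix k N G C" "j < N" "j' < N"
  shows "(mcol k G j = mcol k G j') = (\<forall>c\<in>C. c j = c j')"
proof
  assume e: "mcol k G j = mcol k G j'"
  show "\<forall>c\<in>C. c j = c j'"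
  proof
    fix c assume "c \<in> C"
    then obtain A where A: "A \<subseteq> {..<k}" "c = vsum (mrow N G) A"
      using assms(1) by (auto simp: is_gen_matrix_def code_of_def span_vecs_def)
    show "c j = c j'" using A vsum_mrow[OF A(1)] e assms by simp
  qed
next
  assume h: "\<forall>c\<in>C. c j = c j'"
  show "mcol k G j = mcol k G j'"
  proof
    fix i show "mcol k G j i = mcol k G j' i"
    proof (cases "i < k")
      case True
      then have "mrow N G i \<in> C" using assms(1) in_span[of i k "mrow N G"]
        by (simp add: is_gen_matrix_def code_of_def)
      then have "mrow N G i j = mrow N G i j'" using h by blast
      then show ?thesis using assms by (simp add: mrow_def mcol_def)
    qed (simp add: mcol_def)
  qed
qed

lemma gen_col_zero:
  assumes "is_gen_matrix k N G C" "j < N"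
  shows "(mcol k G j = zvec) = (\<forall>c\<in>C. \<not> c j)"
proof
  assume e: "mcol k G j = zvec"
  show "\<forall>c\<in>C. \<not> c j"
  proof
    fix c assume "c \<in> C"
    then obtain A where A: "A \<subseteq> {..<k}" "c = vsum (mrow N G) A"
      using assms(1) by (auto simp: is_gen_matrix_def code_of_def span_vecs_def)
    show "\<not> c j" using A vsum_mrow[OF A(1)] e assms by simp
  qed
next
  assume h: "\<forall>c\<in>C. \<not> c j"
  show "mcol k G j = zvec"
  proof
    fix i show "mcol k G j i = zvec i"
    proof (cases "i < k")
      case True
      then have "mrow N G i \<in> C" using assms(1) in_span[of i k "mrow N G"]
        by (simp add: is_gen_matrix_def code_of_def)
      then have "\<not> mrow N G i j" using h by blast
      then show ?thesis using assms by (simp add: mrow_def mcol_def zvec_def)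
    qed (simp add: mcol_def zvec_def)
  qed
qed

lemma projective_cols:
  assumes "projective N k C" "is_gen_matrix k N G C"
  shows "(\<forall>j<N. mcol k G j \<noteq> zvec) \<and> inj_on (mcol k G) {..<N}"
proof -
  obtain G' where G': "is_gen_matrix k N G' C" "\<forall>j<N. mcol k G' j \<noteq> zvec" "inj_on (mcol k G') {..<N}"
    using assms(1) unfolding projective_def by blast
  have 1: "\<forall>j<N. mcol k G j \<noteq> zvec"
  proof (intro allI impI)
    fix j assume j: "j < N"
    have "mcol k G' j \<noteq> zvec" using G'(2) j by blast
    then have "\<not> (\<forall>c\<in>C. \<not> c j)" using gen_col_zero[OF G'(1) j] by simp
    then show "mcol k G j \<noteq> zvec" using gen_col_zero[OF assms(2) j] by simp
  qed
  have 2: "inj_on (mcol k G) {..<N}"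
  proof (rule inj_onI)
    fix j j' assume "j \<in> {..<N}" "j' \<in> {..<N}" and e: "mcol k G j = mcol k G j'"
    then have j: "j < N" "j' < N" by auto
    have "\<forall>c\<in>C. c j = c j'" using e gen_col_eq[OF assms(2) j] by simp
    then have "mcol k G' j = mcol k G' j'" using gen_col_eq[OF G'(1) j] by simp
    then show "j = j'" using G'(3) j by (simp add: inj_on_def)
  qed
  show ?thesis using 1 2 by blast
qed

lemma vec_space_image: "vec_space K = (\<lambda>S i. i \<in> S) ` Pow {..<K}"
proof
  show "vec_space K \<subseteq> (\<lambda>S i. i \<in> S) ` Pow {..<K}"
  proof
    fix v assume v: "v \<in> vec_space K"
    have "v = (\<lambda>i. i \<in> {i. v i})" by simp
    moreover have "{i. v i} \<in> Pow {..<K}" using v by (auto simp: vec_space_def not_le[symmetric])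
    ultimately show "v \<in> (\<lambda>S i. i \<in> S) ` Pow {..<K}" by blast
  qed
qed (auto simp: vec_space_def)

lemma vec_space_card: "card (vec_space K) = 2 ^ K" and vec_space_finite: "finite (vec_space K)"
proof -
  have "inj_on (\<lambda>S i. i \<in> S) (Pow {..<K})"
    by (rule inj_onI) (simp add: fun_eq_iff set_eq_iff)
  then show "card (vec_space K) = 2 ^ K" unfolding vec_space_image
    by (simp add: card_image card_Pow)
  show "finite (vec_space K)" unfolding vec_space_image by simp
qed

lemma ip_flip:
  assumes "a \<in> A" "finite A"
  shows "ip A (v(a := \<not> v a)) = (\<not> ip A v)"
proof -
  let ?X = "{i\<in>A. v i}"
  have "{i\<in>A. (v(a := \<not> v a)) i} = (?X - {a}) \<union> ({a} - ?X)"
    using assms by auto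
  moreover have "finite ?X" using assms by simp
  ultimately show ?thesis unfolding ip_def using odd_card_symdiff[of ?X "{a}"] by simp
qed

lemma count_ip:
  assumes "A \<subseteq> {..<K}" "A \<noteq> {}"
  shows "card {v\<in>vec_space K. ip A v} = 2 ^ (K - 1)"
proof -
  obtain a where a: "a \<in> A" using assms by blast
  have aK: "a < K" using a assms by auto
  have fA: "finite A" using assms finite_subset by auto
  define fl where "fl = (\<lambda>v::bvec. v(a := \<not> v a))"
  let ?V = "vec_space K"
  let ?E = "{v\<in>?V. ip A v}" and ?O = "{v\<in>?V. \<not> ip A v}"
  have flfl: "fl (fl v) = v" for v by (simp add: fl_def)
  have flV: "v \<in> ?V \<Longrightarrow> fl v \<in> ?V" for v using aK by (auto simp: fl_def vec_space_def)
  have flip: "ip A (fl v) = (\<not> ip A v)" for v unfolding fl_def using ip_flip[OF a fA] .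
  have img: "fl ` ?E = ?O"
  proof
    show "fl ` ?E \<subseteq> ?O" using flV flip by auto
    show "?O \<subseteq> fl ` ?E"
    proof
      fix v assume "v \<in> ?O"
      then have "fl v \<in> ?E" "v = fl (fl v)" using flV flip flfl by auto
      then show "v \<in> fl ` ?E" by blast
    qed
  qed
  have inj: "inj_on fl ?E" by (rule inj_onI) (metis flfl)
  have "card ?O = card ?E" using card_image[OF inj] img by simp
  moreover have "card ?E + card ?O = 2 ^ K"
  proof -
    have "?V = ?E \<union> ?O" by blast
    moreover have "?E \<inter> ?O = {}" by blast
    moreover have "finite ?E" "finite ?O" using vec_space_finite[of K] by auto
    ultimately have "card ?V = card ?E + card ?O"
      using card_Un_disjoint[of ?E ?O] by simp
    then show ?thesis using vec_space_card[of K] by simp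
  qed
  moreover have "(2::nat) ^ K = 2 * 2 ^ (K - 1)" using aK by (cases K) auto
  ultimately show ?thesis by linarith
qed

lemma simplex_wt:
  assumes bij: "bij_betw (mcol K H) {..<n1} ((vec_space K - {zvec}) - mcol k G ` {..<n})"
    and kK: "k \<le> K" and inj: "inj_on (mcol k G) {..<n}" and nz: "\<forall>j<n. mcol k G j \<noteq> zvec"
    and A: "A \<subseteq> {..<K}" "A \<noteq> {}"
  shows "wt (vsum (mrow n1 H) A) = 2 ^ (K - 1) - wt (vsum (mrow n G) (A \<inter> {..<k}))"
proof -
  let ?V = "vec_space K" and ?Sc = "mcol k G ` {..<n}"
  let ?S = "(?V - {zvec}) - ?Sc"
  have w1: "wt (vsum (mrow n1 H) A) = card {j\<in>{..<n1}. ip A (mcol K H j)}"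
    using wt_mrow[OF A(1)] .
  have injH: "inj_on (mcol K H) {..<n1}" and imH: "mcol K H ` {..<n1} = ?S"
    using bij by (auto simp: bij_betw_def)
  have "{v\<in>?S. ip A v} = mcol K H ` {j\<in>{..<n1}. ip A (mcol K H j)}"
    unfolding imH[symmetric] by auto
  moreover have "inj_on (mcol K H) {j\<in>{..<n1}. ip A (mcol K H j)}"
    using injH by (rule inj_on_subset) blast
  ultimately have w2: "card {j\<in>{..<n1}. ip A (mcol K H j)} = card {v\<in>?S. ip A v}"
    by (simp add: card_image)
  have ScV: "?Sc \<subseteq> ?V" using kK by (auto simp: mcol_def vec_space_def)
  have w3: "{v\<in>?S. ip A v} = {v\<in>?V. ip A v} - {v\<in>?Sc. ip A v}" using ip_zvec[of A] by blast
  have finV: "finite {v\<in>?V. ip A v}" using vec_space_finite[of K] by simp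
  have sub: "{v\<in>?Sc. ip A v} \<subseteq> {v\<in>?V. ip A v}" using ScV by blast
  have w3': "card {v\<in>?S. ip A v} = card {v\<in>?V. ip A v} - card {v\<in>?Sc. ip A v}"
    unfolding w3 by (rule card_Diff_subset[OF finite_subset[OF sub finV] sub])
  have "{v\<in>?Sc. ip A v} = mcol k G ` {j\<in>{..<n}. ip A (mcol k G j)}" by auto
  moreover have "inj_on (mcol k G) {j\<in>{..<n}. ip A (mcol k G j)}"
    using inj by (rule inj_on_subset) blast
  ultimately have w4: "card {v\<in>?Sc. ip A v} = card {j\<in>{..<n}. ip A (mcol k G j)}"
    by (simp add: card_image)
  have w5: "ip A (mcol k G j) = ip (A \<inter> {..<k}) (mcol k G j)" for j
  proof -
    have "{i\<in>A. mcol k G j i} = {i\<in>A \<inter> {..<k}. mcol k G j i}" by (auto simp: mcol_def)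
    then show ?thesis by (simp add: ip_def)
  qed
  have w6: "wt (vsum (mrow n G) (A \<inter> {..<k})) = card {j\<in>{..<n}. ip (A \<inter> {..<k}) (mcol k G j)}"
    by (rule wt_mrow) blast
  show ?thesis using w1 w2 w3' w4 w5 w6 count_ip[OF A] by simp
qed

lemma simplex_len:
  assumes bij: "bij_betw (mcol K H) {..<n1} ((vec_space K - {zvec}) - mcol k G ` {..<n})"
    and kK: "k \<le> K" and inj: "inj_on (mcol k G) {..<n}" and nz: "\<forall>j<n. mcol k G j \<noteq> zvec"
  shows "n1 = 2 ^ K - 1 - n"
proof -
  let ?V = "vec_space K" and ?Sc = "mcol k G ` {..<n}"
  have "card {..<n1} = card ((?V - {zvec}) - ?Sc)" using bij by (rule bij_betw_same_card)
  moreover have ScV: "?Sc \<subseteq> ?V - {zvec}" using kK nz by (auto simp: mcol_def vec_space_def)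
  moreover have "finite (?V - {zvec})" using vec_space_finite[of K] by simp
  ultimately have "n1 = card (?V - {zvec}) - card ?Sc" by (simp add: card_Diff_subset finite_subset)
  moreover have "zvec \<in> ?V" by (simp add: vec_space_def zvec_def)
  then have "card (?V - {zvec}) = 2 ^ K - 1" using vec_space_card[of K] vec_space_finite[of K] by simp
  moreover have "card ?Sc = n" using inj by (simp add: card_image)
  ultimately show ?thesis by simp
qed

lemma ext_vsum:
  "vsum (\<lambda>i j. if j < N' then i = 0 else r i (j - N')) A = (\<lambda>j. if j < N' then 0 \<in> A else vsum r A (j - N'))"
proof
  fix j
  show "vsum (\<lambda>i j. if j < N' then i = 0 else r i (j - N')) A j = (if j < N' then 0 \<in> A else vsum r A (j - N'))"
  proof (cases "j < N'")
    case True
    have "{i\<in>A. i = 0} = (if 0 \<in> A then {0} else {})" by auto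
    then show ?thesis using True by (simp add: vsum_def)
  qed (simp add: vsum_def)
qed

lemma ext_wt:
  assumes "finite (supp c)"
  shows "wt (\<lambda>j. if j < N' then b else c (j - N')) = (if b then N' else 0) + wt c"
proof -
  have "supp (\<lambda>j. if j < N' then b else c (j - N')) = (if b then {..<N'} else {}) \<union> (\<lambda>t. t + N') ` supp c"
  proof (rule set_eqI)
    fix x show "x \<in> supp (\<lambda>j. if j < N' then b else c (j - N')) \<longleftrightarrow> x \<in> (if b then {..<N'} else {}) \<union> (\<lambda>t. t + N') ` supp c"
    proof (cases "x < N'")
      case True then show ?thesis by (auto simp: supp_def)
    next
      case False
      then have x: "x = (x - N') + N'" by simp
      have "x \<in> (\<lambda>t. t + N') ` supp c \<longleftrightarrow> x - N' \<in> supp c"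
      proof
        assume "x \<in> (\<lambda>t. t + N') ` supp c"
        then obtain t where "t \<in> supp c" "x = t + N'" by blast
        then show "x - N' \<in> supp c" by simp
      next
        assume "x - N' \<in> supp c"
        then show "x \<in> (\<lambda>t. t + N') ` supp c" using x by (rule rev_image_eqI)
      qed
      then show ?thesis using False by (simp add: supp_def)
    qed
  qed
  moreover have "(if b then {..<N'} else {}) \<inter> (\<lambda>t. t + N') ` supp c = {}" by auto
  moreover have "card ((\<lambda>t. t + N') ` supp c) = card (supp c)" by (simp add: card_image)
  ultimately show ?thesis using assms unfolding wt_def by (simp add: card_Un_disjoint)
qed

lemma wt_zvec[simp]: "wt zvec = 0" by (simp add: wt_def supp_def zvec_def)

lemma wt_zero_imp: "finite (supp c) \<Longrightarrow> wt c = 0 \<Longrightarrow> c = zvec"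
  by (auto simp: wt_def supp_def zvec_def fun_eq_iff)

lemma wmin_le: "finite C \<Longrightarrow> c \<in> C \<Longrightarrow> c \<noteq> zvec \<Longrightarrow> wmin C \<le> wt c"
  unfolding wmin_def by (rule Min_le) auto

lemma wmax_ge: "finite C \<Longrightarrow> c \<in> C \<Longrightarrow> wt c \<le> wmax C"
  unfolding wmax_def by (rule Max_ge) auto

lemma simplex_code:
  assumes bij: "bij_betw (mcol K H) {..<n1} ((vec_space K - {zvec}) - mcol k G ` {..<n})"
    and kK: "k < K" and inj: "inj_on (mcol k G) {..<n}" and nz: "\<forall>j<n. mcol k G j \<noteq> zvec"
    and bnd: "\<And>A. A \<subseteq> {..<k} \<Longrightarrow> wt (vsum (mrow n G) A) \<le> M0"
    and M0: "M0 < 2 ^ (K - 1)" and M0pos: "0 < M0"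
    and A0: "A0 \<subseteq> {..<k}" "wt (vsum (mrow n G) A0) = M0"
  shows "lin_indep K (mrow n1 H) \<and> wmax (code_of K n1 H) = 2 ^ (K - 1)
       \<and> wmin (code_of K n1 H) = 2 ^ (K - 1) - M0"
proof -
  let ?C = "code_of K n1 H"
  have C: "?C = vsum (mrow n1 H) ` Pow {..<K}" by (simp add: code_of_def span_image)
  have fin: "finite ?C" by (simp add: code_of_def span_finite)
  have wtH: "wt (vsum (mrow n1 H) A) = 2 ^ (K - 1) - wt (vsum (mrow n G) (A \<inter> {..<k}))"
    if "A \<subseteq> {..<K}" "A \<noteq> {}" for A
    using simplex_wt[OF bij less_imp_le[OF kK] inj nz that] .
  have lo: "2 ^ (K - 1) - M0 \<le> wt (vsum (mrow n1 H) A)" if "A \<subseteq> {..<K}" "A \<noteq> {}" for A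
    using wtH[OF that] bnd[of "A \<inter> {..<k}"] by simp
  have hi: "wt (vsum (mrow n1 H) A) \<le> 2 ^ (K - 1)" if "A \<subseteq> {..<K}" for A
    using wtH[OF that] by (cases "A = {}") auto
  have indep: "lin_indep K (mrow n1 H)"
    unfolding lin_indep_def
  proof (intro allI impI)
    fix A assume "A \<subseteq> {..<K}" "vsum (mrow n1 H) A = zvec"
    then show "A = {}" using lo[of A] M0 by (cases "A = {}") auto
  qed
  have "wmax ?C = 2 ^ (K - 1)" unfolding wmax_def
  proof (rule Max_eqI)
    show "finite (wt ` ?C)" using fin by simp
    show "y \<le> 2 ^ (K - 1)" if "y \<in> wt ` ?C" for y using that hi unfolding C by auto
    have "wt (vsum (mrow n1 H) {k}) = 2 ^ (K - 1)" using wtH[of "{k}"] kK by simp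
    moreover have "vsum (mrow n1 H) {k} \<in> ?C" unfolding C using kK by (intro imageI) simp
    ultimately show "2 ^ (K - 1) \<in> wt ` ?C" by (metis imageI)
  qed
  moreover have "wmin ?C = 2 ^ (K - 1) - M0" unfolding wmin_def
  proof (rule Min_eqI)
    show "finite (wt ` (?C - {zvec}))" using fin by simp
    show "2 ^ (K - 1) - M0 \<le> y" if yin: "y \<in> wt ` (?C - {zvec})" for y
    proof -
      obtain c where c: "c \<in> ?C" "c \<noteq> zvec" "y = wt c" using yin by blast
      then obtain A where "A \<subseteq> {..<K}" "c = vsum (mrow n1 H) A" unfolding C by blast
      with c have "A \<subseteq> {..<K}" "y = wt (vsum (mrow n1 H) A)" "vsum (mrow n1 H) A \<noteq> zvec" by auto
      moreover then have "A \<noteq> {}" by auto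
      ultimately show ?thesis using lo by simp
    qed
    have A0K: "A0 \<subseteq> {..<K}" using A0 kK by auto
    have ne: "A0 \<noteq> {}" 
    proof
      assume "A0 = {}" then have "M0 = 0" using A0(2) by simp
      then show False using M0pos by simp
    qed
    have e: "wt (vsum (mrow n1 H) A0) = 2 ^ (K - 1) - M0" using wtH[OF A0K ne] A0 by (simp add: Int_absorb2)
    then have "vsum (mrow n1 H) A0 \<noteq> zvec" using M0 by auto
    moreover have "vsum (mrow n1 H) A0 \<in> ?C" unfolding C using A0K by (intro imageI) simp
    ultimately have "vsum (mrow n1 H) A0 \<in> ?C - {zvec}" by blast
    then show "2 ^ (K - 1) - M0 \<in> wt ` (?C - {zvec})" using e by (metis imageI)
  qed
  ultimately show ?thesis using indep by blast
qed

lemma ext_code: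
  assumes basis: "is_basis K r C1" and lc: "lin_code n1 C1"
    and r0: "wt (r 0) = wmax C1" and r1: "wt (r 1) = wmin C1" and K: "1 < K"
    and N'pos: "1 \<le> N'" and wlt: "wmax C1 < 2 * wmin C1"
  defines "e \<equiv> (\<lambda>i j. if j < N' then i = 0 else r i (j - N'))"
  shows "lin_code (N' + n1) (span_vecs K e) \<and> card (span_vecs K e) = 2 ^ K
     \<and> wmin (span_vecs K e) = wmin C1 \<and> wmax (span_vecs K e) = N' + wmax C1
     \<and> minimal_code (span_vecs K e)"
proof -
  let ?C = "span_vecs K e"
  have indr: "lin_indep K r" and spr: "span_vecs K r = C1" using basis by (auto simp: is_basis_def)
  have finC1: "finite C1" using spr span_finite by metis
  have C1V: "C1 \<subseteq> vec_space n1" using lc by (simp add: lin_code_def)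
  have cwin: "vsum r A \<in> C1" if "A \<subseteq> {..<K}" for A
    using that spr unfolding span_vecs_def by blast
  have fs: "finite (supp (vsum r A))" if "A \<subseteq> {..<K}" for A
    using cwin[OF that] C1V vec_space_finite_supp by blast
  have ve: "vsum e A = (\<lambda>j. if j < N' then 0 \<in> A else vsum r A (j - N'))" for A
    unfolding e_def by (rule ext_vsum)
  have we: "wt (vsum e A) = (if 0 \<in> A then N' else 0) + wt (vsum r A)" if "A \<subseteq> {..<K}" for A
    unfolding ve using ext_wt[OF fs[OF that]] .
  have cwz: "vsum r A = zvec \<Longrightarrow> A \<subseteq> {..<K} \<Longrightarrow> A = {}" for A
    using indr by (simp add: lin_indep_def)
  have tail: "vsum e A (t + N') = vsum r A t" for A t unfolding ve by simp
  have ri: "r i \<in> vec_space n1" if "i < K" for i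
    using cwin[of "{i}"] that C1V by auto
  have lcC: "lin_code (N' + n1) ?C"
  proof (rule span_lin_code)
    fix i assume "i < K"
    then show "e i \<in> vec_space (N' + n1)" using ri unfolding e_def vec_space_def by auto
  qed
  have inde: "lin_indep K e" unfolding lin_indep_def
  proof (intro allI impI)
    fix A assume A: "A \<subseteq> {..<K}" "vsum e A = zvec"
    have "vsum r A = zvec"
    proof
      fix t show "vsum r A t = zvec t" using tail[of A t] A(2) by (simp add: zvec_def)
    qed
    then show "A = {}" using cwz A(1) by blast
  qed
  have cardC: "card ?C = 2 ^ K" by (rule indep_card[OF inde])
  have finC: "finite ?C" by (rule span_finite)
  have Cim: "?C = vsum e ` Pow {..<K}" by (rule span_image)
  have wminpos: "0 < wmin C1" using wlt by simp
  have lo: "wmin C1 \<le> wt (vsum e A)" if "A \<subseteq> {..<K}" "vsum e A \<noteq> zvec" for A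
  proof -
    have "A \<noteq> {}" using that by auto
    then have "vsum r A \<noteq> zvec" using cwz that(1) by blast
    then have "wmin C1 \<le> wt (vsum r A)" using wmin_le[OF finC1 cwin[OF that(1)]] by blast
    then show ?thesis using we[OF that(1)] by simp
  qed
  have hi: "wt (vsum e A) \<le> N' + wmax C1" if "A \<subseteq> {..<K}" for A
    using wmax_ge[OF finC1 cwin[OF that]] we[OF that] by simp
  have wminC: "wmin ?C = wmin C1" unfolding wmin_def[of ?C]
  proof (rule Min_eqI)
    show "finite (wt ` (?C - {zvec}))" using finC by simp
    show "wmin C1 \<le> y" if yin: "y \<in> wt ` (?C - {zvec})" for y
    proof -
      obtain c where c: "c \<in> ?C" "c \<noteq> zvec" "y = wt c" using yin by blast
      then obtain A where "A \<subseteq> {..<K}" "c = vsum e A" unfolding Cim by blast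
      with c lo show ?thesis by blast
    qed
    have w1: "wt (vsum e {1}) = wmin C1" using we[of "{1}"] K r1 by simp
    then have "vsum e {1} \<noteq> zvec" using wminpos by auto
    moreover have "vsum e {1} \<in> ?C" unfolding Cim using K by (intro imageI) simp
    ultimately have "vsum e {1} \<in> ?C - {zvec}" by blast
    then show "wmin C1 \<in> wt ` (?C - {zvec})" using w1 by (metis imageI)
  qed
  have wmaxC: "wmax ?C = N' + wmax C1" unfolding wmax_def[of ?C]
  proof (rule Max_eqI)
    show "finite (wt ` ?C)" using finC by simp
    show "y \<le> N' + wmax C1" if yin: "y \<in> wt ` ?C" for y
    proof -
      obtain c where c: "c \<in> ?C" "y = wt c" using yin by blast
      then obtain A where "A \<subseteq> {..<K}" "c = vsum e A" unfolding Cim by blast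
      with c hi show ?thesis by blast
    qed
    have w0: "wt (vsum e {0}) = N' + wmax C1" using we[of "{0}"] K r0 by simp
    moreover have "vsum e {0} \<in> ?C" unfolding Cim using K by (intro imageI) simp
    ultimately show "N' + wmax C1 \<in> wt ` ?C" by (metis imageI)
  qed
  have minC: "minimal_code ?C" unfolding minimal_code_def
  proof (intro ballI impI)
    fix u v assume u: "u \<in> ?C - {zvec}" and v: "v \<in> ?C - {zvec}" and sub: "supp u \<subseteq> supp v"
    obtain A where A: "A \<subseteq> {..<K}" "u = vsum e A" using u unfolding Cim by blast
    obtain B where B: "B \<subseteq> {..<K}" "v = vsum e B" using v unfolding Cim by blast
    let ?c = "vsum r A" and ?d = "vsum r B"
    have subcd: "supp ?c \<subseteq> supp ?d"
    proof
      fix t assume "t \<in> supp ?c"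
      then have "u (t + N')" using A tail by (simp add: supp_def)
      then have "v (t + N')" using sub by (auto simp: supp_def)
      then show "t \<in> supp ?d" using B tail by (simp add: supp_def)
    qed
    have "?c = ?d"
    proof (rule ccontr)
      assume ne: "?c \<noteq> ?d"
      have cin: "?c \<in> C1" "?d \<in> C1" using cwin A B by auto
      have "?c \<noteq> zvec"
      proof
        assume "?c = zvec" then have "A = {}" using cwz A(1) by blast
        then show False using u A by simp
      qed
      then have l1: "wmin C1 \<le> wt ?c" using wmin_le[OF finC1 cin(1)] by blast
      have l2: "wt ?d \<le> wmax C1" using wmax_ge[OF finC1 cin(2)] .
      have win: "vadd ?c ?d \<in> C1" using lc cin by (simp add: lin_code_def)
      have wnz: "vadd ?c ?d \<noteq> zvec" using ne vadd_eq_zero by blast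
      have l3: "wmin C1 \<le> wt (vadd ?c ?d)" using wmin_le[OF finC1 win wnz] .
      have "supp (vadd ?c ?d) = supp ?d - supp ?c" using subcd by (auto simp: supp_def vadd_def)
      then have "wt (vadd ?c ?d) = wt ?d - wt ?c"
        unfolding wt_def using subcd fs[OF A(1)] by (simp add: card_Diff_subset)
      then show False using l1 l2 l3 wlt by linarith
    qed
    then have "A = B" using indep_inj[OF indr] A B by (auto dest: inj_onD)
    then show "u = v" using A B by simp
  qed
  show ?thesis using lcC cardC wminC wmaxC minC by blast
qed

theorem proposition4p5:
  fixes m h n1 :: nat and C0 :: "bvec set" and G H :: "nat \<Rightarrow> nat \<Rightarrow> bool"
    and r :: "nat \<Rightarrow> bvec"
  assumes "odd m" and "m \<ge> 5" and "h \<ge> 1"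
    and "projective (2^(m-2)) (m-1) C0"
    and "is_code (2^(m-2)) (m-1) (2^(m-3) - 2^((m-3) div 2)) C0"
    and "wmax C0 = 2^(m-3) + 2^((m-3) div 2)"
    and "is_gen_matrix (m-1) (2^(m-2)) G C0"
    and "simplex_compl_matrix (m-1) (2^(m-2)) G h n1 H"
    and "is_basis (m+h-1) r (code_of (m+h-1) n1 H)"
    and "wt (r 0) = wmax (code_of (m+h-1) n1 H)"
    and "wt (r 1) = wmin (code_of (m+h-1) n1 H)"
  shows "let C1 = code_of (m+h-1) n1 H;
             n' = 2^(m+h-2) - 2^(m-2) - 2^((m-1) div 2);
             C' = extension_code C1 (m+h-1) r
         in is_code (2^(m+h-1) - 2^(m-2) - 1) (m+h-1) (2^(m+h-2) - 2^(m-3) - 2^((m-3) div 2)) C1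
          \<and> wmax C1 = 2^(m+h-2)
          \<and> ext_len C1 = n'
          \<and> is_code (2^(m+h-1) - 2^(m-2) - 1 + n') (m+h-1) (2^(m+h-2) - 2^(m-3) - 2^((m-3) div 2)) C'
          \<and> wmax C' = 2^(m+h-1) - 2^(m-2) - 2^((m-1) div 2)
          \<and> wmax C' = 2^(m+h-2) + n'
          \<and> minimal_code C'
          \<and> \<not> ashikhmin_barg C'"
proof -
  note as = assms
  define q where "q = (m - 3) div 2"
  have m: "m = 2 * q + 3" using as(1,2) unfolding q_def by presburger
  have q1: "q \<ge> 1" using as(2) m by simp
  define a :: nat where "a = 2 ^ q"
  define X :: nat where "X = a * a"
  define B :: nat where "B = 2 ^ h"
  define Y :: nat where "Y = X * B"
  have a2: "a \<ge> 2"
  proof -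
    have "(2::nat) ^ 1 \<le> 2 ^ q" using q1 by (rule power_increasing) simp
    then show ?thesis by (simp add: a_def)
  qed
  have B2: "B \<ge> 2"
  proof -
    have "(2::nat) ^ 1 \<le> 2 ^ h" using as(3) by (rule power_increasing) simp
    then show ?thesis by (simp add: B_def)
  qed
  have X2a: "X \<ge> 2 * a" unfolding X_def using a2 by simp
  have Y2X: "Y \<ge> 2 * X" unfolding Y_def using B2 by simp
  have e2q: "(2::nat) ^ (2 * q) = X" unfolding X_def a_def by (simp add: mult_2 power_add)
  have p1: "(2::nat) ^ (m - 3) = X" using e2q m by simp
  have p2: "(2::nat) ^ (m - 2) = 2 * X" using e2q m by simp
  have p3: "(2::nat) ^ ((m - 3) div 2) = a" unfolding a_def q_def ..
  have p4: "(2::nat) ^ ((m - 1) div 2) = 2 * a"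
  proof -
    have "(m - 1) div 2 = q + 1" using m by simp
    then show ?thesis unfolding a_def by simp
  qed
  have p5: "(2::nat) ^ (m + h - 2) = 2 * Y"
  proof -
    have "m + h - 2 = 2 * q + 1 + h" using m by simp
    then show ?thesis unfolding Y_def B_def using e2q by (simp add: power_add)
  qed
  have p6: "(2::nat) ^ (m + h - 1) = 4 * Y"
  proof -
    have "m + h - 1 = 2 * q + 2 + h" using m by simp
    then show ?thesis unfolding Y_def B_def using e2q by (simp add: power_add)
  qed
  define K where "K = m + h - 1"
  define k0 where "k0 = m - 1"
  define n where "n = (2::nat) ^ (m - 2)"
  have KK: "K - 1 = m + h - 2" unfolding K_def by simp
  have k0K: "k0 < K" "k0 + h = K" using as(2,3) unfolding k0_def K_def by auto
  have K1: "1 < K" using as(2) unfolding K_def by simp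
  have gen: "lin_indep k0 (mrow n G)" "span_vecs k0 (mrow n G) = C0"
    using as(7) unfolding is_gen_matrix_def code_of_def k0_def n_def by auto
  have cols: "\<forall>j<n. mcol k0 G j \<noteq> zvec" "inj_on (mcol k0 G) {..<n}"
    using projective_cols[OF as(4) as(7)] unfolding k0_def n_def by auto
  have finC0: "finite C0" using gen(2) span_finite by metis
  have bnd: "wt (vsum (mrow n G) A) \<le> wmax C0" if "A \<subseteq> {..<k0}" for A
  proof -
    have "vsum (mrow n G) A \<in> C0" using gen(2) that unfolding span_vecs_def by blast
    then show ?thesis by (rule wmax_ge[OF finC0])
  qed
  obtain A0 where A0: "A0 \<subseteq> {..<k0}" "wt (vsum (mrow n G) A0) = wmax C0"
  proof -
    have "C0 \<noteq> {}" using gen(2) zero_in_span by blast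
    then have "wmax C0 \<in> wt ` C0" unfolding wmax_def using finC0 by (intro Max_in) auto
    then obtain c where "c \<in> C0" "wt c = wmax C0" by (metis imageE)
    moreover then obtain A where "A \<subseteq> {..<k0}" "c = vsum (mrow n G) A"
      using gen(2) unfolding span_vecs_def by blast
    ultimately show ?thesis using that by blast
  qed
  have M0: "wmax C0 = X + a" using as(6) p1 p3 by simp
  have bij: "bij_betw (mcol K H) {..<n1} ((vec_space K - {zvec}) - mcol k0 G ` {..<n})"
    using as(8) k0K(2) unfolding simplex_compl_matrix_def k0_def n_def by simp
  have M0lt: "wmax C0 < 2 ^ (K - 1)" using M0 KK p5 X2a Y2X a2 by simp
  have M0pos: "0 < wmax C0" using M0 a2 by simp
  have sc: "lin_indep K (mrow n1 H) \<and> wmax (code_of K n1 H) = 2 ^ (K - 1)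
       \<and> wmin (code_of K n1 H) = 2 ^ (K - 1) - wmax C0"
    by (rule simplex_code[OF bij k0K(1) cols(2) cols(1) bnd M0lt M0pos A0])
  have n1v: "n1 = 2 ^ K - 1 - n" by (rule simplex_len[OF bij less_imp_le[OF k0K(1)] cols(2) cols(1)])
  define C1 where "C1 = code_of K n1 H"
  have wmax1: "wmax C1 = 2 * Y" using sc KK p5 unfolding C1_def by simp
  have wmin1: "wmin C1 = 2 * Y - X - a" using sc KK p5 M0 unfolding C1_def by simp
  have lc1: "lin_code n1 C1" unfolding C1_def code_of_def by (rule span_lin_code) (rule mrow_in)
  have card1: "card C1 = 2 ^ K" unfolding C1_def code_of_def using sc indep_card by blast
  have n1': "n1 = 4 * Y - 2 * X - 1" using n1v p6 p2 unfolding K_def n_def by simp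
  define N' where "N' = ext_len C1"
  have N'v: "N' = 2 * Y - 2 * X - 2 * a" unfolding N'_def ext_len_def wmax1 wmin1 using X2a Y2X by simp
  have ec: "extension_code C1 K r = span_vecs K (\<lambda>i j. if j < N' then i = 0 else r i (j - N'))"
    unfolding extension_code_def N'_def ..
  have basis: "is_basis K r C1" using as(9) unfolding C1_def K_def .
  have r0: "wt (r 0) = wmax C1" and r1: "wt (r 1) = wmin C1" using as(10,11) unfolding C1_def K_def by auto
  have N'pos: "1 \<le> N'" using N'v X2a Y2X a2 by simp
  have wlt: "wmax C1 < 2 * wmin C1" using wmax1 wmin1 X2a Y2X a2 by simp
  have ext: "lin_code (N' + n1) (extension_code C1 K r) \<and> card (extension_code C1 K r) = 2 ^ K
     \<and> wmin (extension_code C1 K r) = wmin C1 \<and> wmax (extension_code C1 K r) = N' + wmax C1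
     \<and> minimal_code (extension_code C1 K r)"
    unfolding ec by (rule ext_code[OF basis lc1 r0 r1 K1 N'pos wlt])
  define C' where "C' = extension_code C1 K r"
  have nAB: "\<not> ashikhmin_barg C'"
  proof -
    have "wmax C' = 2 * wmin C'" using ext wmax1 wmin1 N'v X2a Y2X a2 unfolding C'_def by simp
    then show ?thesis unfolding ashikhmin_barg_def by simp
  qed
  have ext': "lin_code (N' + n1) C'" "card C' = 2 ^ K" "wmin C' = wmin C1" "wmax C' = N' + wmax C1"
    "minimal_code C'" using ext unfolding C'_def by auto
  have c1: "is_code (4 * Y - 2 * X - 1) K (2 * Y - X - a) C1"
    unfolding is_code_def using lc1 card1 wmin1 n1' by simp
  have c2: "is_code (4 * Y - 2 * X - 1 + (2 * Y - 2 * X - 2 * a)) K (2 * Y - X - a) C'"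
    unfolding is_code_def using ext' wmin1 n1' N'v by (simp add: add.commute)
  have c3: "wmax C' = 4 * Y - 2 * X - 2 * a" using ext' wmax1 N'v X2a Y2X a2 by simp
  have c4: "wmax C' = 2 * Y + (2 * Y - 2 * X - 2 * a)" using ext' wmax1 N'v by simp
  have c5: "ext_len C1 = 2 * Y - 2 * X - 2 * a" using N'v N'_def by simp
  have p6K: "(2::nat) ^ K = 4 * Y" using p6 K_def by simp
  show ?thesis
    unfolding Let_def p1 p2 p3 p4 p5 p6 K_def[symmetric] C1_def[symmetric]
    unfolding C'_def[symmetric] p6K
    using c1 c2 c3 c4 c5 wmax1 ext'(5) nAB by blast
qed

end
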